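(* Let $b(r),h(r)$ be smooth positive functions on an interval of $r>0$ and consider the metric $ds^2=-b^2dt^2+\dfrac{h^2}{b^2}dr^2+r^2(d\theta^2+\sin^2\theta\,d\phi^2)$. Let $\kappa_1,\kappa_2,\kappa_3$ be constants and $$K_{kl}=(\kappa_2r^2-2\kappa_3b^2)u_ku_l+(\kappa_1+2\kappa_2r^2+\kappa_3b^2)g_{kl}-\kappa_2r^2\,\chi_k\chi_l .$$ Let $\mathscr L$ be a differentiable function of one variable (a nonlinear electrodynamics Lagrangian) with derivative $\mathscr L_F$, let $\mathbb E(r),\mathbb B(r)$ be functions, $F=\tfrac12(\mathbb B^2-\mathbb E^2)$, and $$T_{kl}=2(\mathbb E^2+\mathbb B^2)\,\mathscr L_F(F)\,(u_ku_l-\chi_k\chi_l)+2g_{kl}\left[\mathbb B^2\mathscr L_F(F)-\mathscr L(F)\right].$$ If the conformal Killing gravity field equations $R_{kl}-\tfrac12Rg_{kl}=T_{kl}+K_{kl}$ hold, then there is a constant $\kappa_4$ such that $$\frac{1}{h^2}=\kappa_3r^2+\kappa_4 .$$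
   Context: $u_k$ is the unit timelike covector with components $u_0=-b$ and all others zero; $\chi_k$ is the unit radial covector with $\chi_r=h/b$ and all others zero. $R_{kl}$ is the Ricci tensor and $R$ the scalar curvature. $T_{kl}$ is the stress-energy tensor of nonlinear electrodynamics with electric field magnitude $\mathbb E$ and magnetic field magnitude $\mathbb B$ in this static spherically symmetric setting. *)

theory Defs
  imports "HOL-Analysis.Analysis"
begin

text \<open>Coordinates on a 4-dimensional chart are points of real^4; the index type is 4.
  Coordinate 0 = t, 1 = r, 2 = theta, 3 = phi.
  A metric field is a map from coordinates to a 4x4 symmetric matrix.\<close>

type_synonym coord = "real ^ 4"
type_synonym metric_field = "coord \<Rightarrow> real ^ 4 ^ 4"

definition pd :: "(coord \<Rightarrow> real) \<Rightarrow> 4 \<Rightarrow> coord \<Rightarrow> real" where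
  "pd f i x = deriv (\<lambda>s. f (\<chi> j. if j = i then s else x $ j)) (x $ i)"

definition ginv :: "metric_field \<Rightarrow> coord \<Rightarrow> real ^ 4 ^ 4" where
  "ginv g x = matrix_inv (g x)"

definition christoffel :: "metric_field \<Rightarrow> 4 \<Rightarrow> 4 \<Rightarrow> 4 \<Rightarrow> coord \<Rightarrow> real" where
  "christoffel g a b c x =
     (1/2) * (\<Sum>d\<in>UNIV. ginv g x $ a $ d *
        (pd (\<lambda>y. g y $ d $ b) c x + pd (\<lambda>y. g y $ d $ c) b x - pd (\<lambda>y. g y $ b $ c) d x))"

text \<open>Ricci tensor R_{bd} = R^a_{bad}, standard (MTW) sign convention.\<close>
definition ricci :: "metric_field \<Rightarrow> 4 \<Rightarrow> 4 \<Rightarrow> coord \<Rightarrow> real" where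
  "ricci g b d x =
     (\<Sum>a\<in>UNIV. pd (\<lambda>y. christoffel g a b d y) a x - pd (\<lambda>y. christoffel g a b a y) d x
        + (\<Sum>e\<in>UNIV. christoffel g a a e x * christoffel g e b d x
                     - christoffel g a d e x * christoffel g e b a x))"

definition scalar_curv :: "metric_field \<Rightarrow> coord \<Rightarrow> real" where
  "scalar_curv g x = (\<Sum>b\<in>UNIV. \<Sum>d\<in>UNIV. ginv g x $ b $ d * ricci g b d x)"

definition smooth_on :: "real set \<Rightarrow> (real \<Rightarrow> real) \<Rightarrow> bool" where
  "smooth_on I f \<longleftrightarrow> (\<forall>n. \<forall>r\<in>I. ((deriv ^^ n) f) differentiable (at r))"

definition ssm_metric :: "(real \<Rightarrow> real) \<Rightarrow> (real \<Rightarrow> real) \<Rightarrow> metric_field" where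
  "ssm_metric b h x = (\<chi> k l.
      if k \<noteq> l then 0
      else if k = 0 then - (b (x$1))\<^sup>2
      else if k = 1 then (h (x$1))\<^sup>2 / (b (x$1))\<^sup>2
      else if k = 2 then (x$1)\<^sup>2
      else (x$1)\<^sup>2 * (sin (x$2))\<^sup>2)"

definition u_cov :: "(real \<Rightarrow> real) \<Rightarrow> coord \<Rightarrow> 4 \<Rightarrow> real" where
  "u_cov b x k = (if k = 0 then - b (x$1) else 0)"

definition chi_cov :: "(real \<Rightarrow> real) \<Rightarrow> (real \<Rightarrow> real) \<Rightarrow> coord \<Rightarrow> 4 \<Rightarrow> real" where
  "chi_cov b h x k = (if k = 1 then h (x$1) / b (x$1) else 0)"

definition K_tensor :: "real \<Rightarrow> real \<Rightarrow> real \<Rightarrow> (real \<Rightarrow> real) \<Rightarrow> (real \<Rightarrow> real) \<Rightarrow> coord \<Rightarrow> 4 \<Rightarrow> 4 \<Rightarrow> real" where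
  "K_tensor k1 k2 k3 b h x k l =
     (let r = x$1 in
       (k2 * r\<^sup>2 - 2 * k3 * (b r)\<^sup>2) * u_cov b x k * u_cov b x l
       + (k1 + 2 * k2 * r\<^sup>2 + k3 * (b r)\<^sup>2) * ssm_metric b h x $ k $ l
       - k2 * r\<^sup>2 * chi_cov b h x k * chi_cov b h x l)"

definition T_tensor :: "(real \<Rightarrow> real) \<Rightarrow> (real \<Rightarrow> real) \<Rightarrow> (real \<Rightarrow> real) \<Rightarrow> (real \<Rightarrow> real)
    \<Rightarrow> (real \<Rightarrow> real) \<Rightarrow> (real \<Rightarrow> real) \<Rightarrow> coord \<Rightarrow> 4 \<Rightarrow> 4 \<Rightarrow> real" where
  "T_tensor L LF E B b h x k l =
     (let r = x$1; F = ((B r)\<^sup>2 - (E r)\<^sup>2) / 2 in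
       2 * ((E r)\<^sup>2 + (B r)\<^sup>2) * LF F * (u_cov b x k * u_cov b x l - chi_cov b h x k * chi_cov b h x l)
       + 2 * ssm_metric b h x $ k $ l * ((B r)\<^sup>2 * LF F - L F))"

end

theory Submission
  imports Defs
begin

lemma ex4: fixes x :: 4 shows "x = 0 \<or> x = 1 \<or> x = 2 \<or> x = 3"
proof (induct x)
  case (of_int z)
  then have "z = 0 \<or> z = 1 \<or> z = 2 \<or> z = 3" by fastforce
  then show ?case by auto
qed
lemma UNIV4: "(UNIV::4 set) = {0,1,2,3}" using ex4 by blast
lemma sum4: "sum f (UNIV::4 set) = f 0 + f 1 + f 2 + f 3"
  unfolding UNIV4 by (simp add: ac_simps)
lemma all4: "(\<forall>i::4. P i) \<longleftrightarrow> P 0 \<and> P 1 \<and> P 2 \<and> P 3"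
  using ex4 by metis

definition Gd :: "(real \<Rightarrow> real) \<Rightarrow> (real \<Rightarrow> real) \<Rightarrow> 4 \<Rightarrow> real \<Rightarrow> real \<Rightarrow> real" where
  "Gd b h k r t = (if k = 0 then - (b r)\<^sup>2 else if k = 1 then (h r)\<^sup>2 / (b r)\<^sup>2
      else if k = 2 then r\<^sup>2 else r\<^sup>2 * (sin t)\<^sup>2)"

definition DGd :: "(real \<Rightarrow> real) \<Rightarrow> (real \<Rightarrow> real) \<Rightarrow> 4 \<Rightarrow> 4 \<Rightarrow> real \<Rightarrow> real \<Rightarrow> real" where
  "DGd b h k c r t = (if c = 1 then (if k = 0 then -2 * b r * deriv b r
      else if k = 1 then 2 * h r * deriv h r / (b r)\<^sup>2 - 2 * (h r)\<^sup>2 * deriv b r / (b r)^3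
      else if k = 2 then 2 * r else 2 * r * (sin t)\<^sup>2)
    else if c = 2 then (if k = 3 then 2 * r\<^sup>2 * sin t * cos t else 0) else 0)"

definition CF :: "(real \<Rightarrow> real) \<Rightarrow> (real \<Rightarrow> real) \<Rightarrow> 4 \<Rightarrow> 4 \<Rightarrow> 4 \<Rightarrow> real \<Rightarrow> real \<Rightarrow> real" where
  "CF b h a c d r t = 1 / (2 * Gd b h a r t) *
     ((if a = c then DGd b h a d r t else 0) + (if a = d then DGd b h a c r t else 0)
      - (if c = d then DGd b h c a r t else 0))"

lemma metric_eq: "ssm_metric b h y $ k $ l = (if k = l then Gd b h k (y$1) (y$2) else 0)"
proof (cases "k = l")
  case True
  show ?thesis unfolding ssm_metric_def Gd_def
    by (simp only: vec_lambda_beta True simp_thms if_True if_False)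
next
  case False
  show ?thesis unfolding ssm_metric_def Gd_def
    by (simp only: vec_lambda_beta False simp_thms if_True if_False)
qed

lemma matrix_inv_eq:
  fixes A D :: "real^4^4"
  assumes "A ** D = mat 1" "D ** A = mat 1"
  shows "matrix_inv A = D"
proof -
  have ex: "\<exists>A'. A ** A' = mat 1 \<and> A' ** A = mat 1" using assms by blast
  define M where "M = matrix_inv A"
  have M: "A ** M = mat 1 \<and> M ** A = mat 1" unfolding M_def matrix_inv_def
    using someI_ex[OF ex] .
  have "M = M ** (A ** D)" using assms by (simp add: matrix_mul_rid)
  also have "\<dots> = (M ** A) ** D" by (simp add: matrix_mul_assoc)
  also have "\<dots> = D" using M by (simp add: matrix_mul_lid)
  finally show ?thesis unfolding M_def .
qed

lemma ginv_eq:
  assumes "\<And>k. Gd b h k (y$1) (y$2) \<noteq> 0"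
  shows "ginv (ssm_metric b h) y $ a $ d = (if a = d then 1 / Gd b h a (y$1) (y$2) else 0)"
proof -
  define D :: "real^4^4" where "D = (\<chi> k l. if k = l then 1 / Gd b h k (y$1) (y$2) else 0)"
  have 1: "ssm_metric b h y ** D = mat 1"
  proof -
    have "(ssm_metric b h y ** D) $ i $ j = mat 1 $ i $ j" for i j
      unfolding matrix_matrix_mult_def D_def mat_def vec_lambda_beta sum4 metric_eq
      using ex4[of i] ex4[of j] assms[of i] by (elim disjE) simp_all
    then show ?thesis by (simp add: vec_eq_iff)
  qed
  have 2: "D ** ssm_metric b h y = mat 1"
  proof -
    have "(D ** ssm_metric b h y) $ i $ j = mat 1 $ i $ j" for i j
      unfolding matrix_matrix_mult_def D_def mat_def vec_lambda_beta sum4 metric_eq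
      using ex4[of i] ex4[of j] assms[of i] by (elim disjE) simp_all
    then show ?thesis by (simp add: vec_eq_iff)
  qed
  show ?thesis unfolding ginv_def matrix_inv_eq[OF 1 2] D_def by simp
qed

lemma deriv_eqI: "(f has_real_derivative D) (at x) \<Longrightarrow> D = E \<Longrightarrow> deriv f x = E"
  using DERIV_imp_deriv by blast

lemma deriv_Gd_r:
  assumes db: "b differentiable (at r)" and dh: "h differentiable (at r)" and b0: "b r \<noteq> 0"
  shows "deriv (\<lambda>s. Gd b h k s t) r = DGd b h k 1 r t"
proof -
  have db': "(b has_real_derivative deriv b r) (at r)" using db DERIV_deriv_iff_real_differentiable by blast
  have dh': "(h has_real_derivative deriv h r) (at r)" using dh DERIV_deriv_iff_real_differentiable by blast
  consider "k = 0" | "k = 1" | "k = 2" | "k = 3" using ex4 by blast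
  then show ?thesis
  proof cases
    case 1
    have "deriv (\<lambda>s. - (b s)\<^sup>2) r = -2 * b r * deriv b r"
      by (rule deriv_eqI[OF DERIV_minus[OF DERIV_power[OF db']]]) simp
    then show ?thesis using 1 by (simp add: Gd_def DGd_def)
  next
    case 2
    have "deriv (\<lambda>s. (h s)\<^sup>2 / (b s)\<^sup>2) r =
        2 * h r * deriv h r / (b r)\<^sup>2 - 2 * (h r)\<^sup>2 * deriv b r / (b r)^3"
      by (rule deriv_eqI[OF DERIV_divide[OF DERIV_power[OF dh'] DERIV_power[OF db']]])
         (use b0 in \<open>simp_all add: field_simps power2_eq_square power3_eq_cube\<close>)
    then show ?thesis using 2 by (simp add: Gd_def DGd_def)
  next
    case 3
    have "deriv (\<lambda>s. s\<^sup>2) r = 2 * r"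
      by (rule deriv_eqI[OF DERIV_power[OF DERIV_ident]]) simp
    then show ?thesis using 3 by (simp add: Gd_def DGd_def)
  next
    case 4
    have "deriv (\<lambda>s. s\<^sup>2 * (sin t)\<^sup>2) r = 2 * r * (sin t)\<^sup>2"
      by (rule deriv_eqI[OF DERIV_mult[OF DERIV_power[OF DERIV_ident] DERIV_const]]) simp
    then show ?thesis using 4 by (simp add: Gd_def DGd_def)
  qed
qed

lemma deriv_Gd_t:
  shows "deriv (\<lambda>s. Gd b h k r s) t = DGd b h k 2 r t"
proof -
  consider "k = 0" | "k = 1" | "k = 2" | "k = 3" using ex4 by blast
  then show ?thesis
  proof cases
    case 4
    have "deriv (\<lambda>s. r\<^sup>2 * (sin s)\<^sup>2) t = 2 * r\<^sup>2 * sin t * cos t"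
      by (rule deriv_eqI[OF DERIV_mult[OF DERIV_const DERIV_power[OF DERIV_sin]]]) simp
    then show ?thesis using 4 by (simp add: Gd_def DGd_def)
  qed (simp_all add: Gd_def DGd_def)
qed

lemma pd_metric:
  assumes db: "b differentiable (at (y$1))" and dh: "h differentiable (at (y$1))" and b0: "b (y$1) \<noteq> 0"
  shows "pd (\<lambda>y. ssm_metric b h y $ d $ e) c y = (if d = e then DGd b h d c (y$1) (y$2) else 0)"
proof (cases "d = e")
  case True
  consider "c = 0" | "c = 1" | "c = 2" | "c = 3" using ex4 by blast
  then show ?thesis
  proof cases
    case 1 then show ?thesis using True by (simp add: pd_def metric_eq DGd_def)
  next
    case 2 then show ?thesis using True deriv_Gd_r[OF db dh b0] by (simp add: pd_def metric_eq)
  next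
    case 3 then show ?thesis using True deriv_Gd_t by (simp add: pd_def metric_eq)
  next
    case 4 then show ?thesis using True by (simp add: pd_def metric_eq DGd_def)
  qed
qed (simp add: pd_def metric_eq)

lemma sum_delta4: "(\<Sum>d\<in>(UNIV::4 set). (if a = d then u else 0) * Q d) = u * (Q a :: real)"
proof -
  have "(\<Sum>d\<in>(UNIV::4 set). (if a = d then u else 0) * Q d) = (\<Sum>d\<in>(UNIV::4 set). if a = d then u * Q a else 0)"
    by (rule sum.cong) auto
  then show ?thesis by simp
qed

lemma christoffel_eq:
  assumes db: "b differentiable (at (y$1))" and dh: "h differentiable (at (y$1))"
    and nz: "\<And>k. Gd b h k (y$1) (y$2) \<noteq> 0" and b0: "b (y$1) \<noteq> 0"
  shows "christoffel (ssm_metric b h) a c d y = CF b h a c d (y$1) (y$2)"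
  unfolding christoffel_def CF_def ginv_eq[OF nz] sum_delta4 pd_metric[OF db dh b0]
  by simp

locale setup_bh =
  fixes b h :: "real \<Rightarrow> real" and I :: "real set"
  assumes I_open: "open I"
    and good: "\<And>s. s \<in> I \<Longrightarrow> b s > 0 \<and> h s > 0 \<and> s > 0 \<and> b differentiable (at s) \<and> h differentiable (at s)
       \<and> deriv b differentiable (at s)"
begin

lemma Gd_nz: "y1 \<in> I \<Longrightarrow> 0 < y2 \<Longrightarrow> y2 < pi \<Longrightarrow> Gd b h k y1 y2 \<noteq> 0"
  using good[of y1] sin_gt_zero[of y2] unfolding Gd_def by auto

lemma cf_local:
  assumes "y$1 \<in> I" "0 < y$2" "y$2 < pi"
  shows "christoffel (ssm_metric b h) a c d y = CF b h a c d (y$1) (y$2)"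
  using assms good[of "y$1"] by (intro christoffel_eq Gd_nz) auto

lemma pd_christoffel:
  assumes x1: "x$1 \<in> I" and x2: "0 < x$2" "x$2 < pi"
  shows "pd (\<lambda>y. christoffel (ssm_metric b h) a c d y) i x =
    (if i = 1 then deriv (\<lambda>s. CF b h a c d s (x$2)) (x$1)
     else if i = 2 then deriv (\<lambda>s. CF b h a c d (x$1) s) (x$2) else 0)"
proof -
  define f where "f = (\<lambda>s. christoffel (ssm_metric b h) a c d (\<chi> j. if j = i then s else x $ j))"
  have pdf: "pd (\<lambda>y. christoffel (ssm_metric b h) a c d y) i x = deriv f (x$i)"
    unfolding pd_def f_def ..
  consider "i = 0" | "i = 1" | "i = 2" | "i = 3" using ex4 by blast
  then show ?thesis
  proof cases
    case 1
    have "f s = CF b h a c d (x$1) (x$2)" for s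
    proof -
      have e1: "(\<chi> j. if j = i then s else x $ j) $ 1 = x$1" "(\<chi> j. if j = i then s else x $ j) $ 2 = x$2"
        using 1 by simp_all
      show ?thesis unfolding f_def using cf_local[of "\<chi> j. if j = i then s else x $ j"] e1 x1 x2 by simp
    qed
    then have "f = (\<lambda>s. CF b h a c d (x$1) (x$2))" by blast
    then show ?thesis using 1 pdf by simp
  next
    case 4
    have "f s = CF b h a c d (x$1) (x$2)" for s
    proof -
      have e1: "(\<chi> j. if j = i then s else x $ j) $ 1 = x$1" "(\<chi> j. if j = i then s else x $ j) $ 2 = x$2"
        using 4 by simp_all
      show ?thesis unfolding f_def using cf_local[of "\<chi> j. if j = i then s else x $ j"] e1 x1 x2 by simp
    qed
    then have "f = (\<lambda>s. CF b h a c d (x$1) (x$2))" by blast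
    then show ?thesis using 4 pdf by simp
  next
    case 2
    have ev: "eventually (\<lambda>s. s \<in> I) (nhds (x$1))" using x1 I_open eventually_nhds_in_open by blast
    have "f s = CF b h a c d s (x$2)" if "s \<in> I" for s
    proof -
      have e1: "(\<chi> j. if j = i then s else x $ j) $ 1 = s" "(\<chi> j. if j = i then s else x $ j) $ 2 = x$2"
        using 2 by simp_all
      show ?thesis unfolding f_def using cf_local[of "\<chi> j. if j = i then s else x $ j"] e1 that x2 by simp
    qed
    then have "deriv f (x$1) = deriv (\<lambda>s. CF b h a c d s (x$2)) (x$1)"
      by (intro deriv_cong_ev[OF eventually_mono[OF ev]]) auto
    then show ?thesis using 2 pdf by simp
  next
    case 3
    have ev: "eventually (\<lambda>s. s \<in> {0<..<pi}) (nhds (x$2))" using x2 eventually_nhds_in_open by (metis greaterThanLessThan_iff open_greaterThanLessThan)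
    have "f s = CF b h a c d (x$1) s" if "s \<in> {0<..<pi}" for s
    proof -
      have e1: "(\<chi> j. if j = i then s else x $ j) $ 1 = x$1" "(\<chi> j. if j = i then s else x $ j) $ 2 = s"
        using 3 by simp_all
      show ?thesis unfolding f_def using cf_local[of "\<chi> j. if j = i then s else x $ j"] e1 that x1 by simp
    qed
    then have "deriv f (x$2) = deriv (\<lambda>s. CF b h a c d (x$1) s) (x$2)"
      by (intro deriv_cong_ev[OF eventually_mono[OF ev]]) auto
    then show ?thesis using 3 pdf by simp
  qed
qed


lemma ev_I: "r \<in> I \<Longrightarrow> eventually (\<lambda>s. s \<in> I) (nhds r)"
  using I_open eventually_nhds_in_open by blast

lemma D100:
  assumes r: "r \<in> I"
  shows "deriv (\<lambda>s. CF b h 1 0 0 s t) r = 3 * (b r)\<^sup>2 * (deriv b r)\<^sup>2 / (h r)\<^sup>2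
     + (b r)^3 * deriv (deriv b) r / (h r)\<^sup>2 - 2 * (b r)^3 * deriv b r * deriv h r / (h r)^3"
proof -
  have "deriv (\<lambda>s. CF b h 1 0 0 s t) r = deriv (\<lambda>s. (b s)^3 * deriv b s / (h s)\<^sup>2) r"
  proof (rule deriv_cong_ev[OF eventually_mono[OF ev_I[OF r]]])
    fix s assume "s \<in> I"
    then have "b s > 0" "h s > 0" using good by auto
    then show "CF b h 1 0 0 s t = (b s)^3 * deriv b s / (h s)\<^sup>2"
      by (simp add: CF_def Gd_def DGd_def field_simps power2_eq_square power3_eq_cube)
  qed simp
  also have "\<dots> = 3 * (b r)\<^sup>2 * (deriv b r)\<^sup>2 / (h r)\<^sup>2
     + (b r)^3 * deriv (deriv b) r / (h r)\<^sup>2 - 2 * (b r)^3 * deriv b r * deriv h r / (h r)^3"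
  proof (rule DERIV_imp_deriv)
    have g: "b r > 0" "h r > 0" "b differentiable (at r)" "h differentiable (at r)" "deriv b differentiable (at r)"
      using good[OF r] by auto
    have d1: "(b has_real_derivative deriv b r) (at r)" "(h has_real_derivative deriv h r) (at r)"
      "(deriv b has_real_derivative deriv (deriv b) r) (at r)"
      using g DERIV_deriv_iff_real_differentiable by blast+
    show "((\<lambda>s. (b s)^3 * deriv b s / (h s)\<^sup>2) has_real_derivative (3 * (b r)\<^sup>2 * (deriv b r)\<^sup>2 / (h r)\<^sup>2
     + (b r)^3 * deriv (deriv b) r / (h r)\<^sup>2 - 2 * (b r)^3 * deriv b r * deriv h r / (h r)^3)) (at r)"
      by (rule DERIV_cong[OF DERIV_divide[OF DERIV_mult[OF DERIV_power[OF d1(1)] d1(3)] DERIV_power[OF d1(2)]]])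
         (use g in \<open>simp_all add: field_simps power2_eq_square power3_eq_cube\<close>)
  qed
  finally show ?thesis .
qed

lemma D010:
  assumes r: "r \<in> I"
  shows "deriv (\<lambda>s. CF b h 0 1 0 s t) r = deriv (deriv b) r / b r - (deriv b r)\<^sup>2 / (b r)\<^sup>2"
proof -
  have "deriv (\<lambda>s. CF b h 0 1 0 s t) r = deriv (\<lambda>s. deriv b s / b s) r"
  proof (rule deriv_cong_ev[OF eventually_mono[OF ev_I[OF r]]])
    fix s assume "s \<in> I"
    then have "b s > 0" "h s > 0" using good by auto
    then show "CF b h 0 1 0 s t = deriv b s / b s"
      by (simp add: CF_def Gd_def DGd_def field_simps power2_eq_square power3_eq_cube)
  qed simp
  also have "\<dots> = deriv (deriv b) r / b r - (deriv b r)\<^sup>2 / (b r)\<^sup>2"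
  proof (rule DERIV_imp_deriv)
    have g: "b r > 0" "h r > 0" "b differentiable (at r)" "h differentiable (at r)" "deriv b differentiable (at r)"
      using good[OF r] by auto
    have d1: "(b has_real_derivative deriv b r) (at r)" "(h has_real_derivative deriv h r) (at r)"
      "(deriv b has_real_derivative deriv (deriv b) r) (at r)"
      using g DERIV_deriv_iff_real_differentiable by blast+
    show "((\<lambda>s. deriv b s / b s) has_real_derivative (deriv (deriv b) r / b r - (deriv b r)\<^sup>2 / (b r)\<^sup>2)) (at r)"
      by (rule DERIV_cong[OF DERIV_divide[OF d1(3) d1(1)]])
         (use g in \<open>simp_all add: field_simps power2_eq_square power3_eq_cube\<close>)
  qed
  finally show ?thesis .
qed

lemma D212:
  assumes r: "r \<in> I"
  shows "deriv (\<lambda>s. CF b h 2 1 2 s t) r = - 1 / r\<^sup>2"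
proof -
  have "deriv (\<lambda>s. CF b h 2 1 2 s t) r = deriv (\<lambda>s. 1 / s) r"
  proof (rule deriv_cong_ev[OF eventually_mono[OF ev_I[OF r]]])
    fix s assume "s \<in> I"
    then have "s > 0" using good by auto
    then show "CF b h 2 1 2 s t = 1 / s"
      by (simp add: CF_def Gd_def DGd_def field_simps power2_eq_square)
  qed simp
  also have "\<dots> = - 1 / r\<^sup>2"
  proof (rule DERIV_imp_deriv)
    have g: "r > 0" using good[OF r] by auto
    show "((\<lambda>s. 1 / s) has_real_derivative (- 1 / r\<^sup>2)) (at r)"
      by (rule DERIV_cong[OF DERIV_divide[OF DERIV_const DERIV_ident]])
         (use g in \<open>simp_all add: field_simps power2_eq_square\<close>)
  qed
  finally show ?thesis .
qed

lemma D313: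
  assumes r: "r \<in> I" and t: "sin t \<noteq> 0"
  shows "deriv (\<lambda>s. CF b h 3 1 3 s t) r = - 1 / r\<^sup>2"
proof -
  have "deriv (\<lambda>s. CF b h 3 1 3 s t) r = deriv (\<lambda>s. 1 / s) r"
  proof (rule deriv_cong_ev[OF eventually_mono[OF ev_I[OF r]]])
    fix s assume "s \<in> I"
    then have "s > 0" using good by auto
    then show "CF b h 3 1 3 s t = 1 / s"
      using t by (simp add: CF_def Gd_def DGd_def field_simps power2_eq_square)
  qed simp
  also have "\<dots> = - 1 / r\<^sup>2"
  proof (rule DERIV_imp_deriv)
    have g: "r > 0" using good[OF r] by auto
    show "((\<lambda>s. 1 / s) has_real_derivative (- 1 / r\<^sup>2)) (at r)"
      by (rule DERIV_cong[OF DERIV_divide[OF DERIV_const DERIV_ident]])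
         (use g in \<open>simp_all add: field_simps power2_eq_square\<close>)
  qed
  finally show ?thesis .
qed


lemma main_eq:
  assumes r: "r \<in> I"
    and fe: "\<forall>x::coord. x$1 \<in> I \<longrightarrow> 0 < x$2 \<longrightarrow> x$2 < pi \<longrightarrow>
       (\<forall>k l. ricci (ssm_metric b h) k l x
               - (1/2) * scalar_curv (ssm_metric b h) x * ssm_metric b h x $ k $ l
             = T_tensor L LF E B b h x k l + K_tensor k1 k2 k3 b h x k l)"
  shows "deriv h r = - k3 * r * (h r)^3"
proof -
  define x0 :: coord where "x0 = (\<chi> j. if j = 1 then r else if j = 2 then pi/2 else 0)"
  have x01: "x0$1 = r" and x02: "x0$2 = pi/2" by (simp_all add: x0_def)
  have g: "b r > 0" "h r > 0" "r > 0" using good[OF r] by auto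
  have fx: "x0$1 \<in> I" "0 < x0$2" "x0$2 < pi" unfolding x01 x02 using r pi_gt_zero by simp_all
  have pdx0: "pd (\<lambda>y. christoffel (ssm_metric b h) a c d y) i x0 =
    (if i = 1 then deriv (\<lambda>s. CF b h a c d s (pi/2)) r
     else if i = 2 then deriv (\<lambda>s. CF b h a c d r s) (pi/2) else 0)" for a c d i
    using pd_christoffel[of x0, OF fx] unfolding x01 x02 .
  have cfx0: "christoffel (ssm_metric b h) a c d x0 = CF b h a c d r (pi/2)" for a c d
    using cf_local[of x0, OF fx] unfolding x01 x02 .
  have z1: "CF b h 2 0 0 r = (\<lambda>s. 0)" "CF b h 2 1 1 r = (\<lambda>s. 0)"
    by (simp_all add: fun_eq_iff CF_def Gd_def DGd_def)
  have R00: "ricci (ssm_metric b h) 0 0 x0 = (b r)\<^sup>2 * (deriv b r)\<^sup>2 / (h r)\<^sup>2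
      + (b r)^3 * deriv (deriv b) r / (h r)\<^sup>2 - (b r)^3 * deriv b r * deriv h r / (h r)^3
      + 2 * (b r)^3 * deriv b r / (r * (h r)\<^sup>2)"
    apply (simp only: ricci_def sum4 pdx0 cfx0)
    apply (simp add: D100 D010 D212 D313 r z1)
    apply (simp add: CF_def Gd_def DGd_def)
    using g apply (simp add: field_simps)
    by algebra
  have R11: "ricci (ssm_metric b h) 1 1 x0 = - deriv (deriv b) r / b r
      + (deriv h r / h r - deriv b r / b r) * (2 / r + deriv b r / b r)"
    apply (simp only: ricci_def sum4 pdx0 cfx0)
    apply (simp add: D100 D010 D212 D313 r z1)
    apply (simp add: CF_def Gd_def DGd_def)
    using g apply (simp add: field_simps)
    by algebra
  note e0 = fe[rule_format, OF fx, of 0 0]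
  note e1 = fe[rule_format, OF fx, of 1 1]
  define S where "S = scalar_curv (ssm_metric b h) x0"
  define F where "F = ((B r)\<^sup>2 - (E r)\<^sup>2) / 2"
  have m00: "ssm_metric b h x0 $ 0 $ 0 = - (b r)\<^sup>2" and m11: "ssm_metric b h x0 $ 1 $ 1 = (h r)\<^sup>2 / (b r)\<^sup>2"
    by (simp_all add: metric_eq Gd_def x01)
  have T00: "T_tensor L LF E B b h x0 0 0 = 2 * ((E r)\<^sup>2 + (B r)\<^sup>2) * LF F * (b r)\<^sup>2 - 2 * (b r)\<^sup>2 * ((B r)\<^sup>2 * LF F - L F)"
    unfolding T_tensor_def Let_def x01 m00 F_def by (simp add: u_cov_def chi_cov_def x01 power2_eq_square)
  have T11: "T_tensor L LF E B b h x0 1 1 = - 2 * ((E r)\<^sup>2 + (B r)\<^sup>2) * LF F * (h r)\<^sup>2 / (b r)\<^sup>2 + 2 * (h r)\<^sup>2 / (b r)\<^sup>2 * ((B r)\<^sup>2 * LF F - L F)"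
    unfolding T_tensor_def Let_def x01 m11 F_def by (simp add: u_cov_def chi_cov_def x01 power2_eq_square power_divide) (use g in \<open>simp add: field_simps\<close>)
  have K00: "K_tensor k1 k2 k3 b h x0 0 0 = (k2 * r\<^sup>2 - 2 * k3 * (b r)\<^sup>2) * (b r)\<^sup>2 - (k1 + 2 * k2 * r\<^sup>2 + k3 * (b r)\<^sup>2) * (b r)\<^sup>2"
    unfolding K_tensor_def Let_def x01 m00 by (simp add: u_cov_def chi_cov_def x01 power2_eq_square)
  have K11: "K_tensor k1 k2 k3 b h x0 1 1 = (k1 + 2 * k2 * r\<^sup>2 + k3 * (b r)\<^sup>2) * ((h r)\<^sup>2 / (b r)\<^sup>2) - k2 * r\<^sup>2 * (h r)\<^sup>2 / (b r)\<^sup>2"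
    unfolding K_tensor_def Let_def x01 m11 by (simp add: u_cov_def chi_cov_def x01 power2_eq_square)
  have e0': "ricci (ssm_metric b h) 0 0 x0 = (1/2) * S * (- (b r)\<^sup>2) + (2 * ((E r)\<^sup>2 + (B r)\<^sup>2) * LF F * (b r)\<^sup>2 - 2 * (b r)\<^sup>2 * ((B r)\<^sup>2 * LF F - L F))
     + ((k2 * r\<^sup>2 - 2 * k3 * (b r)\<^sup>2) * (b r)\<^sup>2 - (k1 + 2 * k2 * r\<^sup>2 + k3 * (b r)\<^sup>2) * (b r)\<^sup>2)"
    using e0 unfolding m00 T00 K00 S_def by linarith
  have e1': "ricci (ssm_metric b h) 1 1 x0 = (1/2) * S * ((h r)\<^sup>2 / (b r)\<^sup>2) + (- 2 * ((E r)\<^sup>2 + (B r)\<^sup>2) * LF F * (h r)\<^sup>2 / (b r)\<^sup>2 + 2 * (h r)\<^sup>2 / (b r)\<^sup>2 * ((B r)\<^sup>2 * LF F - L F))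
     + ((k1 + 2 * k2 * r\<^sup>2 + k3 * (b r)\<^sup>2) * ((h r)\<^sup>2 / (b r)\<^sup>2) - k2 * r\<^sup>2 * (h r)\<^sup>2 / (b r)\<^sup>2)"
    using e1 unfolding m11 T11 K11 S_def by linarith
  have comb: "(h r)\<^sup>2 / (b r)\<^sup>2 * ricci (ssm_metric b h) 0 0 x0 + (b r)\<^sup>2 * ricci (ssm_metric b h) 1 1 x0
      = - 2 * k3 * (b r)\<^sup>2 * (h r)\<^sup>2"
    unfolding e0' e1' using g by (simp add: field_simps) algebra
  have comb2: "(h r)\<^sup>2 / (b r)\<^sup>2 * ricci (ssm_metric b h) 0 0 x0 + (b r)\<^sup>2 * ricci (ssm_metric b h) 1 1 x0
      = 2 * (b r)\<^sup>2 * deriv h r / (r * h r)"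
    unfolding R00 R11 using g by (simp add: field_simps) algebra
  have "2 * (b r)\<^sup>2 * deriv h r / (r * h r) = - 2 * k3 * (b r)\<^sup>2 * (h r)\<^sup>2"
    using comb comb2 by simp
  then have H: "b r * (b r * deriv h r) = - (k3 * (r * (b r * (b r * (h r * (h r * h r))))))"
    using g by (simp add: field_simps power2_eq_square power3_eq_cube)
  have nz: "b r * b r \<noteq> 0" using g by simp
  have "(b r * b r) * deriv h r = (b r * b r) * (- k3 * r * (h r)^3)"
    unfolding mult.assoc H by (simp add: algebra_simps power3_eq_cube)
  then show ?thesis by (rule mult_left_cancel[THEN iffD1, OF nz])
qed

end

theorem proposition11:
  fixes b h E B L LF :: "real \<Rightarrow> real" and I :: "real set" and k1 k2 k3 :: real
  assumes I_open: "open I" and I_interval: "is_interval I" and I_ne: "I \<noteq> {}"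
    and I_pos: "I \<subseteq> {0<..}"
    and b_smooth: "smooth_on I b" and h_smooth: "smooth_on I h"
    and b_pos: "\<forall>r\<in>I. b r > 0" and h_pos: "\<forall>r\<in>I. h r > 0"
    and L_deriv: "\<forall>y. (L has_real_derivative LF y) (at y)"
    and field_eqs: "\<forall>x::coord. x$1 \<in> I \<longrightarrow> 0 < x$2 \<longrightarrow> x$2 < pi \<longrightarrow>
       (\<forall>k l. ricci (ssm_metric b h) k l x
               - (1/2) * scalar_curv (ssm_metric b h) x * ssm_metric b h x $ k $ l
             = T_tensor L LF E B b h x k l + K_tensor k1 k2 k3 b h x k l)"
  shows "\<exists>k4. \<forall>r\<in>I. 1 / (h r)\<^sup>2 = k3 * r\<^sup>2 + k4"
proof -
  have good: "b s > 0 \<and> h s > 0 \<and> s > 0 \<and> b differentiable (at s) \<and> h differentiable (at s)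
       \<and> deriv b differentiable (at s)" if s: "s \<in> I" for s
  proof -
    have "((deriv ^^ 0) b) differentiable (at s)" "((deriv ^^ 1) b) differentiable (at s)"
      "((deriv ^^ 0) h) differentiable (at s)"
      using b_smooth h_smooth s unfolding smooth_on_def by blast+
    then show ?thesis using b_pos h_pos I_pos s by auto
  qed
  interpret setup_bh b h I
    by unfold_locales (use I_open good in auto)
  have hd: "deriv h r = - k3 * r * (h r)^3" if "r \<in> I" for r
    using main_eq[OF that field_eqs] .
  have "\<exists>c. \<forall>x\<in>I. (\<lambda>s. 1 / (h s)\<^sup>2 - k3 * s\<^sup>2) x = c"
  proof (rule has_field_derivative_zero_constant[OF is_interval_convex[OF I_interval]])
    fix x assume x: "x \<in> I"
    have gx: "h x > 0" "h differentiable (at x)" using good[OF x] by auto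
    have dh: "(h has_real_derivative deriv h x) (at x)" using gx DERIV_deriv_iff_real_differentiable by blast
    have "((\<lambda>s. 1 / (h s)\<^sup>2 - k3 * s\<^sup>2) has_real_derivative 0) (at x)"
      by (rule DERIV_cong[OF DERIV_diff[OF DERIV_divide[OF DERIV_const DERIV_power[OF dh]] DERIV_cmult[OF DERIV_power[OF DERIV_ident]]]])
         (use gx hd[OF x] in \<open>simp_all add: field_simps power2_eq_square power3_eq_cube\<close>)
    then show "((\<lambda>s. 1 / (h s)\<^sup>2 - k3 * s\<^sup>2) has_real_derivative 0) (at x within I)"
      by (rule has_field_derivative_at_within)
  qed
  then obtain c where "\<forall>x\<in>I. 1 / (h x)\<^sup>2 - k3 * x\<^sup>2 = c" by auto
  then show ?thesis by (intro exI[of _ c]) auto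
qed

end
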